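(* Let $m,n$ be integers, $w_k=(ab^{-1})^m ab(a^{-1}b)^m$ and $r=w_k^n(ab^{-1})^m$ in the free group $F_{a,b}$. For a word $u\in F_{a,b}$ let $P_u\in\mathbb C[x,y,z]$ be the unique polynomial with $\operatorname{tr}\rho(u)=P_u(\operatorname{tr}\rho(a),\operatorname{tr}\rho(b),\operatorname{tr}\rho(ab^{-1}))$ for all $\rho:F_{a,b}\to\mathrm{SL}_2(\mathbb C)$, and let $\varphi=P_{rab}-P_{\overleftarrow{r}ab}$. Then \[\varphi(x,y,z)=\big(xyz+4-x^2-y^2-z^2\big)\big(S_n(t)S_{m-1}(z)-S_{n-1}(t)S_m(z)\big),\] where $t=\left( xS_m(z)-yS_{m-1}(z) \right)\left( yS_m(z)-xS_{m-1}(z) \right)-z\left(S^2_m(z)+S^2_{m-1}(z)\right)+4S_m(z)S_{m-1}(z)$.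
   Context: $\overleftarrow{u}$ denotes the word $u$ with its letters written in reversed order. The Chebyshev polynomials $S_j(\omega)$ are defined for all integers $j$ by $S_0=1$, $S_1=\omega$, $S_{j+1}=\omega S_j-S_{j-1}$. (The polynomial $\varphi$ cuts out the $\mathrm{SL}_2(\mathbb C)$ character variety of the double twist link $J(2m+1,2n+1)$ in $\mathbb C^3(x,y,z)$.) *)

theory Defs
  imports "HOL-Analysis.Analysis"
begin

datatype letter = La | Lai | Lb | Lbi

fun letter_inv :: "letter \<Rightarrow> letter" where
  "letter_inv La = Lai" | "letter_inv Lai = La" | "letter_inv Lb = Lbi" | "letter_inv Lbi = Lb"

definition word_inv :: "letter list \<Rightarrow> letter list" where
  "word_inv u = rev (map letter_inv u)"

definition word_pow :: "letter list \<Rightarrow> int \<Rightarrow> letter list" where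
  "word_pow u k = (if 0 \<le> k then concat (replicate (nat k) u)
                   else concat (replicate (nat (- k)) (word_inv u)))"

definition word_rev :: "letter list \<Rightarrow> letter list" where
  "word_rev u = rev u"

definition w_word :: "int \<Rightarrow> letter list" where
  "w_word m = word_pow [La, Lbi] m @ [La, Lb] @ word_pow [Lai, Lb] m"

definition r_word :: "int \<Rightarrow> int \<Rightarrow> letter list" where
  "r_word m n = word_pow (w_word m) n @ word_pow [La, Lbi] m"

fun eval_letter :: "complex^2^2 \<Rightarrow> complex^2^2 \<Rightarrow> letter \<Rightarrow> complex^2^2" where
  "eval_letter A B La = A"
| "eval_letter A B Lai = matrix_inv A"
| "eval_letter A B Lb = B"
| "eval_letter A B Lbi = matrix_inv B"

definition eval_word :: "complex^2^2 \<Rightarrow> complex^2^2 \<Rightarrow> letter list \<Rightarrow> complex^2^2" where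
  "eval_word A B u = foldr (\<lambda>l M. eval_letter A B l ** M) u (mat 1)"

definition trace_poly :: "letter list \<Rightarrow> complex \<Rightarrow> complex \<Rightarrow> complex \<Rightarrow> complex" where
  "trace_poly u = (THE P. \<forall>A B :: complex^2^2. det A = 1 \<longrightarrow> det B = 1 \<longrightarrow>
       trace (eval_word A B u) = P (trace A) (trace B) (trace (A ** matrix_inv B)))"

text \<open>Chebyshev polynomials S_j for all integers j: S_0 = 1, S_1 = w,
  S_{j+1} = w S_j - S_{j-1}.  U n = S_{n-1} for n \<ge> 0, and S_{-j} = - S_{j-2}.\<close>
fun cheb_U :: "nat \<Rightarrow> complex \<Rightarrow> complex" where
  "cheb_U 0 w = 0"
| "cheb_U (Suc 0) w = 1"
| "cheb_U (Suc (Suc k)) w = w * cheb_U (Suc k) w - cheb_U k w"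

definition cheb_S :: "int \<Rightarrow> complex \<Rightarrow> complex" where
  "cheb_S j w = (if -1 \<le> j then cheb_U (nat (j + 1)) w else - cheb_U (nat (- j - 1)) w)"

end

theory Submission
  imports Defs
begin


definition mk :: "complex \<Rightarrow> complex \<Rightarrow> complex \<Rightarrow> complex \<Rightarrow> complex^2^2" where
  "mk a b c d = (\<chi> i j. if i = 1 then (if j = 1 then a else b) else (if j = 1 then c else d))"

lemma mk_nth[simp]: "mk a b c d $1$1 = a" "mk a b c d $1$2 = b" "mk a b c d $2$1 = c" "mk a b c d $2$2 = d"
  by (simp_all add: mk_def)

lemma mk_eta: "M = mk (M$1$1) (M$1$2) (M$2$1) (M$2$2)"
  by (simp add: vec_eq_iff forall_2)

lemma mk_mult[simp]: "mk a b c d ** mk e f g h = mk (a*e+b*g) (a*f+b*h) (c*e+d*g) (c*f+d*h)"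
  by (simp add: vec_eq_iff forall_2 matrix_matrix_mult_def sum_2)

lemma mk_trace[simp]: "trace (mk a b c d) = a + d"
  by (simp add: trace_def sum_2)

lemma mk_det[simp]: "det (mk a b c d) = a * d - b * c"
  by (simp add: det_2)

lemma mat1_mk: "mat 1 = mk 1 0 0 1"
  by (simp add: vec_eq_iff forall_2 mat_def)

lemma mk_eq_iff: "mk a b c d = mk a' b' c' d' \<longleftrightarrow> a = a' \<and> b = b' \<and> c = c' \<and> d = d'"
  by (metis mk_nth)

lemma matrix_inv_mk:
  assumes "a * d - b * c = 1"
  shows "matrix_inv (mk a b c d) = mk d (-b) (-c) a"
proof -
  let ?M = "mk a b c d" and ?N = "mk d (-b) (-c) a"
  have h1: "?M ** ?N = mat 1" and h2: "?N ** ?M = mat 1"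
    using assms by (simp_all add: mat1_mk mk_eq_iff algebra_simps)
  hence "\<exists>A'. ?M ** A' = mat 1 \<and> A' ** ?M = mat 1" by blast
  hence h3: "?M ** matrix_inv ?M = mat 1 \<and> matrix_inv ?M ** ?M = mat 1"
    unfolding matrix_inv_def by (rule someI_ex)
  have "matrix_inv ?M = matrix_inv ?M ** (?M ** ?N)" by (simp only: h1 matrix_mul_rid)
  also have "\<dots> = ?N" by (simp only: matrix_mul_assoc h3 matrix_mul_lid)
  finally show ?thesis .
qed

lemma matrix_inv_det1:
  assumes "det M = 1"
  shows "matrix_inv M = mk (M$2$2) (-M$1$2) (-M$2$1) (M$1$1)"
  using assms matrix_inv_mk[of "M$1$1" "M$2$2" "M$1$2" "M$2$1"] mk_eta[of M]
  by (metis mk_det)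

lemma eval_word_Nil[simp]: "eval_word A B [] = mat 1"
  by (simp add: eval_word_def)
lemma eval_word_Cons[simp]: "eval_word A B (l # u) = eval_letter A B l ** eval_word A B u"
  by (simp add: eval_word_def)
lemma eval_word_append[simp]: "eval_word A B (u @ v) = eval_word A B u ** eval_word A B v"
  by (induction u) (simp_all add: matrix_mul_assoc)

lemma det_eval_letter:
  assumes "det A = 1" "det B = 1" shows "det (eval_letter A B l) = 1"
  using assms by (cases l) (simp_all add: matrix_inv_det1, (metis mk_det mk_eta mult.commute)+)

lemma det_eval_word:
  assumes "det A = 1" "det B = 1" shows "det (eval_word A B u) = 1"
  by (induction u) (simp_all add: det_mul det_eval_letter assms mat1_mk)


lemma S_pos: "cheb_S (int k - 1) w = cheb_U k w"
  by (simp add: cheb_S_def)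

lemma S_neg: "cheb_S (- int k - 1) w = - cheb_U k w"
proof (cases k)
  case 0 then show ?thesis by (simp add: cheb_S_def)
next
  case (Suc n)
  have "nat (- (- int k - 1) - 1) = k" by simp
  moreover have "\<not> (-1 \<le> - int k - 1)" using Suc by simp
  ultimately show ?thesis by (simp add: cheb_S_def)
qed

lemma S_rec: "cheb_S (j + 1) w = w * cheb_S j w - cheb_S (j - 1) w"
proof (cases "j \<ge> 0")
  case True
  then obtain k where k: "j = int k" by (metis nonneg_int_cases)
  have e1: "j + 1 = int (Suc (Suc k)) - 1" "j = int (Suc k) - 1" "j - 1 = int k - 1" using k by simp_all
  have "cheb_S (j + 1) w = cheb_U (Suc (Suc k)) w" by (simp only: e1(1) S_pos)
  moreover have "cheb_S j w = cheb_U (Suc k) w" by (simp only: e1(2) S_pos)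
  moreover have "cheb_S (j - 1) w = cheb_U k w" by (simp only: e1(3) S_pos)
  ultimately show ?thesis by simp
next
  case False
  define k where "k = nat (- j - 1)"
  have k: "j = - int k - 1" using False k_def by simp
  show ?thesis
  proof (cases k)
    case 0
    then show ?thesis using k by (simp add: cheb_S_def)
  next
    case (Suc k')
    have e1: "j + 1 = - int k' - 1" "j = - int (Suc k') - 1" "j - 1 = - int (Suc (Suc k')) - 1"
      using k Suc by simp_all
    have "cheb_S (j + 1) w = - cheb_U k' w" by (simp only: e1(1) S_neg)
    moreover have "cheb_S j w = - cheb_U (Suc k') w" by (simp only: e1(2) S_neg)
    moreover have "cheb_S (j - 1) w = - cheb_U (Suc (Suc k')) w" by (simp only: e1(3) S_neg)
    ultimately show ?thesis by simp
  qed
qed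

lemma S_refl: "cheb_S (- i) w = - cheb_S (i - 2) w"
proof (cases "i \<ge> 1")
  case True
  define k where "k = nat (i - 1)"
  have e: "- i = - int k - 1" "i - 2 = int k - 1" using True k_def by simp_all
  show ?thesis by (simp only: e S_pos S_neg)
next
  case False
  define k where "k = nat (- i)"
  have e: "- i = int (Suc k) - 1" "i - 2 = - int (Suc k) - 1" using False k_def by simp_all
  show ?thesis by (simp only: e S_pos S_neg) simp
qed

lemma S_id_aux: "(R::complex) = w * S - T \<Longrightarrow> S^2 - w * S * T + T^2 = 1 \<Longrightarrow> R^2 - w * R * S + S^2 = 1"
  by algebra

lemma S_id: "(cheb_S j w)^2 - w * cheb_S j w * cheb_S (j - 1) w + (cheb_S (j - 1) w)^2 = 1"
proof (induction j rule: int_induct[where k = 0])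
  case base
  then show ?case by (simp add: cheb_S_def)
next
  case (step1 i)
  show ?case using S_id_aux[OF S_rec[of i w] step1.IH] by simp
next
  case (step2 i)
  have r: "cheb_S i w = w * cheb_S (i - 1) w - cheb_S (i - 1 - 1) w" using S_rec[of "i - 1" w] by simp
  have "(cheb_S (i - 1) w)^2 - w * cheb_S (i - 1) w * cheb_S (i - 1 - 1) w + (cheb_S (i - 1 - 1) w)^2 = 1"
    using step2.IH r by algebra
  then show ?case by simp
qed


lemma matrix_inv_mult1:
  fixes X Y :: "complex^2^2"
  assumes "det X = 1" "det Y = 1"
  shows "matrix_inv (X ** Y) = matrix_inv Y ** matrix_inv X"
proof -
  obtain a b c d where X: "X = mk a b c d" by (metis mk_eta)
  obtain e f g h where Y: "Y = mk e f g h" by (metis mk_eta)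
  have dX: "a * d - b * c = 1" using assms X by simp
  have dY: "e * h - f * g = 1" using assms Y by simp
  have dXY: "(a * e + b * g) * (c * f + d * h) - (a * f + b * h) * (c * e + d * g) = 1"
    using det_mul[of X Y] assms X Y by simp
  show ?thesis unfolding X Y mk_mult matrix_inv_mk[OF dX] matrix_inv_mk[OF dY] matrix_inv_mk[OF dXY]
    by (simp add: mk_eq_iff algebra_simps)
qed

lemma matrix_inv_inv1:
  fixes X :: "complex^2^2"
  assumes "det X = 1" shows "matrix_inv (matrix_inv X) = X"
proof -
  obtain a b c d where X: "X = mk a b c d" by (metis mk_eta)
  have dX: "a * d - b * c = 1" using assms X by simp
  have dX': "d * a - (- b) * (- c) = 1" using dX by (simp add: algebra_simps)
  show ?thesis unfolding X matrix_inv_mk[OF dX] matrix_inv_mk[OF dX'] by simp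
qed

lemma matrix_inv_I: "matrix_inv (mat 1 :: complex^2^2) = mat 1"
  unfolding mat1_mk by (subst matrix_inv_mk) simp_all

lemma eval_letter_inv:
  assumes "det A = 1" "det B = 1"
  shows "eval_letter A B (letter_inv l) = matrix_inv (eval_letter A B l)"
  using assms by (cases l) (simp_all add: matrix_inv_inv1)

lemma eval_word_inv:
  assumes "det A = 1" "det B = 1"
  shows "eval_word A B (word_inv u) = matrix_inv (eval_word A B u)"
proof (induction u)
  case Nil
  then show ?case by (simp add: word_inv_def matrix_inv_I)
next
  case (Cons l u)
  have "word_inv (l # u) = word_inv u @ [letter_inv l]" by (simp add: word_inv_def)
  then show ?case using Cons
    by (simp add: eval_letter_inv assms matrix_inv_mult1 det_eval_letter det_eval_word)
qed

lemma pow_step: assumes h: "a*d - b*c = (1::complex)" shows "mk a b c d ** mk (p*a - q) (p*b) (p*c) (p*d - q) =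
   mk (((a+d)*p - q)*a - p) (((a+d)*p - q)*b) (((a+d)*p-q)*c) (((a+d)*p - q)*d - p)"
  unfolding mk_mult mk_eq_iff using h by (intro conjI) (algebra | simp add: algebra_simps)+

lemma eval_concat_rep:
  assumes "det A = 1" "det B = 1" "eval_word A B u = mk a b c d" "a * d - b * c = 1"
  shows "eval_word A B (concat (replicate k u)) =
     mk (cheb_S (int k - 1) (a + d) * a - cheb_S (int k - 2) (a + d)) (cheb_S (int k - 1) (a + d) * b)
        (cheb_S (int k - 1) (a + d) * c) (cheb_S (int k - 1) (a + d) * d - cheb_S (int k - 2) (a + d))"
proof (induction k)
  case 0
  then show ?case by (simp add: cheb_S_def mat1_mk)
next
  case (Suc k)
  have r: "cheb_S (int k) (a + d) = (a + d) * cheb_S (int k - 1) (a + d) - cheb_S (int k - 2) (a + d)"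
    using S_rec[of "int k - 1" "a + d"] by simp
  have e1: "int (Suc k) - 1 = int k" "int (Suc k) - 2 = int k - 1" by simp_all
  show ?case unfolding e1 r using Suc assms(3) pow_step[OF assms(4)] by simp
qed

lemma eval_word_pow:
  assumes "det A = 1" "det B = 1" "eval_word A B u = mk a b c d" "a * d - b * c = 1"
  shows "eval_word A B (word_pow u k) =
     mk (cheb_S (k - 1) (a + d) * a - cheb_S (k - 2) (a + d)) (cheb_S (k - 1) (a + d) * b)
        (cheb_S (k - 1) (a + d) * c) (cheb_S (k - 1) (a + d) * d - cheb_S (k - 2) (a + d))"
proof (cases "0 \<le> k")
  case True
  then have e: "k = int (nat k)" by simp
  show ?thesis using eval_concat_rep[OF assms, of "nat k"] True
    by (simp add: word_pow_def)
next
  case False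
  define j where "j = nat (- k)"
  have kj: "k = - int j" using False j_def by simp
  have iu: "eval_word A B (word_inv u) = mk d (- b) (- c) a"
    using eval_word_inv[OF assms(1,2)] assms(3) matrix_inv_mk[OF assms(4)] by simp
  have d': "d * a - (- b) * (- c) = 1" using assms(4) by (simp add: algebra_simps)
  have w: "word_pow u k = concat (replicate j (word_inv u))" using False j_def by (simp add: word_pow_def)
  have e1: "k - 1 = - (int j + 1)" "int j + 1 - 2 = int j - 1" "k - 2 = - (int j + 2)" "int j + 2 - 2 = int j"
    using kj by simp_all
  have s1: "cheb_S (k - 1) (a + d) = - cheb_S (int j - 1) (a + d)"
    using S_refl[of "int j + 1" "a + d"] by (simp only: e1)
  have s2: "cheb_S (k - 2) (a + d) = - cheb_S (int j) (a + d)"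
    using S_refl[of "int j + 2" "a + d"] by (simp only: e1)
  have r: "cheb_S (int j) (a + d) = (a + d) * cheb_S (int j - 1) (a + d) - cheb_S (int j - 2) (a + d)"
    using S_rec[of "int j - 1" "a + d"] by simp
  show ?thesis unfolding w eval_concat_rep[OF assms(1,2) iu d', of j] s1 s2 r
    by (simp add: mk_eq_iff algebra_simps)
qed

lemma rev_word_inv: "rev (word_inv u) = word_inv (rev u)"
  by (simp add: word_inv_def rev_map)

lemma word_rev_pow: "word_rev (word_pow u k) = word_pow (rev u) k"
  by (simp add: word_rev_def word_pow_def rev_concat rev_word_inv)


fun cstep :: "complex \<Rightarrow> complex \<Rightarrow> complex \<Rightarrow> letter \<Rightarrow> complex \<times> complex \<times> complex \<times> complex
   \<Rightarrow> complex \<times> complex \<times> complex \<times> complex" where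
  "cstep x y w La (c0, c1, c2, c3) = (-c1, c0 + x*c1, -c3, c2 + x*c3)"
| "cstep x y w Lai (c0, c1, c2, c3) = (x*c0 + c1, -c0, x*c2 + c3, -c2)"
| "cstep x y w Lb (c0, c1, c2, c3) = (c1*(w - x*y) - c2 - x*c3, y*c1 + c3, c0 + x*c1 + y*c2 + w*c3, -c1)"
| "cstep x y w Lbi (c0, c1, c2, c3) = (y*c0 - (w - x*y)*c1 + c2 + x*c3, -c3, -c0 - x*c1 - w*c3, c1 + y*c3)"

definition coef :: "letter list \<Rightarrow> complex \<Rightarrow> complex \<Rightarrow> complex \<Rightarrow> complex \<times> complex \<times> complex \<times> complex" where
  "coef u x y w = foldr (cstep x y w) u (1, 0, 0, 0)"

definition combm :: "complex^2^2 \<Rightarrow> complex^2^2 \<Rightarrow> complex \<times> complex \<times> complex \<times> complex \<Rightarrow> complex^2^2" where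
  "combm A B c = (case c of (c0, c1, c2, c3) \<Rightarrow>
     mk (c0 + c1 * A$1$1 + c2 * B$1$1 + c3 * (A**B)$1$1) (c1 * A$1$2 + c2 * B$1$2 + c3 * (A**B)$1$2)
        (c1 * A$2$1 + c2 * B$2$1 + c3 * (A**B)$2$1) (c0 + c1 * A$2$2 + c2 * B$2$2 + c3 * (A**B)$2$2))"

definition Qf :: "letter list \<Rightarrow> complex \<Rightarrow> complex \<Rightarrow> complex \<Rightarrow> complex" where
  "Qf u x y w = (case coef u x y w of (c0, c1, c2, c3) \<Rightarrow> 2*c0 + x*c1 + y*c2 + w*c3)"

lemma combm_step:
  assumes A: "A = mk a1 a2 a3 a4" and B: "B = mk b1 b2 b3 b4"
    and dA: "a1*a4 - a2*a3 = 1" and dB: "b1*b4 - b2*b3 = 1"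
  shows "eval_letter A B l ** combm A B c = combm A B (cstep (a1+a4) (b1+b4) (trace (A ** B)) l c)"
proof -
  obtain c0 c1 c2 c3 where c: "c = (c0, c1, c2, c3)" by (metis prod_cases4)
  show ?thesis
  proof (cases l)
    case La
    show ?thesis unfolding La using dA dB
      by (simp add: A B c combm_def matrix_inv_mk mk_eq_iff) (intro conjI; (algebra | simp add: algebra_simps))
  next
    case Lai
    show ?thesis unfolding Lai using dA dB
      by (simp add: A B c combm_def matrix_inv_mk mk_eq_iff) (intro conjI; (algebra | simp add: algebra_simps))
  next
    case Lb
    show ?thesis unfolding Lb using dA dB
      by (simp add: A B c combm_def matrix_inv_mk mk_eq_iff) (intro conjI; (algebra | simp add: algebra_simps))
  next
    case Lbi
    show ?thesis unfolding Lbi using dA dB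
      by (simp add: A B c combm_def matrix_inv_mk mk_eq_iff) (intro conjI; (algebra | simp add: algebra_simps))
  qed
qed

lemma eval_word_coef:
  assumes A: "A = mk a1 a2 a3 a4" and B: "B = mk b1 b2 b3 b4"
    and dA: "a1*a4 - a2*a3 = 1" and dB: "b1*b4 - b2*b3 = 1"
  shows "eval_word A B u = combm A B (coef u (a1+a4) (b1+b4) (trace (A ** B)))"
proof (induction u)
  case Nil
  then show ?case by (simp add: coef_def combm_def mat1_mk A B)
next
  case (Cons l u)
  then show ?case using combm_step[OF A B dA dB] by (simp add: coef_def)
qed

lemma trace_eval_Qf:
  fixes A B :: "complex^2^2"
  assumes "det A = 1" "det B = 1"
  shows "trace (eval_word A B u) = Qf u (trace A) (trace B) (trace (A ** B))"
proof -
  obtain a1 a2 a3 a4 where A: "A = mk a1 a2 a3 a4" by (metis mk_eta)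
  obtain b1 b2 b3 b4 where B: "B = mk b1 b2 b3 b4" by (metis mk_eta)
  have dA: "a1*a4 - a2*a3 = 1" and dB: "b1*b4 - b2*b3 = 1" using assms A B by simp_all
  obtain c0 c1 c2 c3 where c: "coef u (a1+a4) (b1+b4) (trace (A ** B)) = (c0, c1, c2, c3)" by (metis prod_cases4)
  show ?thesis unfolding eval_word_coef[OF A B dA dB] Qf_def
    using c by (simp add: A B combm_def algebra_simps)
qed

lemma trace_AinvB:
  fixes A B :: "complex^2^2"
  assumes "det B = 1"
  shows "trace (A ** matrix_inv B) = trace A * trace B - trace (A ** B)"
proof -
  obtain a1 a2 a3 a4 where A: "A = mk a1 a2 a3 a4" by (metis mk_eta)
  obtain b1 b2 b3 b4 where B: "B = mk b1 b2 b3 b4" by (metis mk_eta)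
  have dB: "b1*b4 - b2*b3 = 1" using assms B by simp_all
  show ?thesis unfolding A B matrix_inv_mk[OF dB] by (simp add: algebra_simps)
qed

lemma surj_traces:
  fixes x y z :: complex
  shows "\<exists>A B :: complex^2^2. det A = 1 \<and> det B = 1 \<and> trace A = x \<and> trace B = y \<and> trace (A ** matrix_inv B) = z"
proof -
  define s where "s = csqrt (y^2 - 4)"
  define a where "a = (y + s) / 2"
  define d where "d = y - a"
  define c where "c = x * d - z"
  have s2: "s^2 = y^2 - 4" unfolding s_def by simp
  have ad: "a * d = 1" unfolding d_def a_def using s2 by (simp add: field_simps power2_eq_square)
  have dB: "a * d - 0 * c = 1" using ad by simp
  have "det (mk x 1 (-1) 0) = 1 \<and> det (mk a 0 c d) = 1 \<and> trace (mk x 1 (-1) 0) = x \<and> trace (mk a 0 c d) = y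
     \<and> trace (mk x 1 (-1) 0 ** matrix_inv (mk a 0 c d)) = z"
    using ad unfolding matrix_inv_mk[OF dB] by (simp add: d_def c_def algebra_simps)
  then show ?thesis by blast
qed

lemma trace_poly_eq:
  fixes A B :: "complex^2^2"
  assumes "det A = 1" "det B = 1"
  shows "trace_poly u (trace A) (trace B) (trace (A ** matrix_inv B)) = trace (eval_word A B u)"
proof -
  define F where "F = (\<lambda>x y z. Qf u x y (x * y - z))"
  have hP: "\<forall>A B :: complex^2^2. det A = 1 \<longrightarrow> det B = 1 \<longrightarrow>
       trace (eval_word A B u) = F (trace A) (trace B) (trace (A ** matrix_inv B))"
    by (simp add: F_def trace_eval_Qf trace_AinvB)
  have "trace_poly u = F"
    unfolding trace_poly_def
  proof (rule the_equality)
    show "\<forall>A B :: complex^2^2. det A = 1 \<longrightarrow> det B = 1 \<longrightarrow>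
       trace (eval_word A B u) = F (trace A) (trace B) (trace (A ** matrix_inv B))" by (rule hP)
  next
    fix P assume h: "\<forall>A B :: complex^2^2. det A = 1 \<longrightarrow> det B = 1 \<longrightarrow>
       trace (eval_word A B u) = P (trace A) (trace B) (trace (A ** matrix_inv B))"
    show "P = F"
    proof (rule ext, rule ext, rule ext)
      fix x y z
      obtain A B :: "complex^2^2" where ab: "det A = 1" "det B = 1" "trace A = x" "trace B = y"
        "trace (A ** matrix_inv B) = z" using surj_traces by blast
      show "P x y z = F x y z" using h[rule_format, OF ab(1,2)] hP[rule_format, OF ab(1,2)] ab by simp
    qed
  qed
  then show ?thesis using hP assms by simp
qed


definition "XMm t e x a c d = mk (t*(x*d - c) - e) (t*a) (- t*d) (- e)"
definition "YMm t e x a c d = mk (t*(- c) - e) (- t*d) (t*(a + x*c)) (t*(x*d) - e)"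
definition "XPm t e x a c d = mk (t*(d*x) - e) (t*d) (t*(- c*x - a)) (- t*c - e)"
definition "YPm t e x a c d = mk (- e) (- t*a) (t*d) (t*(d*x - c) - e)"

lemma I1:
  assumes "a*d = 1" "t^2 - (x*d - c)*t*e + e^2 = 1"
  shows "trace (XMm t e x a c d ** (mk x 1 (-1) 0 ** mk a 0 c d) ** YMm t e x a c d) =
    (let z = x*d - c; y = a + d; s = z*t - e in
     (x * s - y * t) * (y * s - x * t) - z * (s\<^sup>2 + t\<^sup>2) + 4 * s * t)"
  using assms unfolding XMm_def YMm_def mk_mult mk_trace Let_def by algebra

lemma I2:
  assumes "a*d = 1" "t^2 - (x*d - c)*t*e + e^2 = 1"
  shows "trace (YPm t e x a c d ** (mk a 0 c d ** mk x 1 (-1) 0) ** XPm t e x a c d) =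
    (let z = x*d - c; y = a + d; s = z*t - e in
     (x * s - y * t) * (y * s - x * t) - z * (s\<^sup>2 + t\<^sup>2) + 4 * s * t)"
  using assms unfolding XPm_def YPm_def mk_mult mk_trace Let_def by algebra

lemma I3:
  assumes "a*d = 1" "t^2 - (x*d - c)*t*e + e^2 = 1"
  shows "trace (XMm t e x a c d ** (mk x 1 (-1) 0 ** mk a 0 c d)) - trace (mk x 1 (-1) 0 ** mk a 0 c d ** XPm t e x a c d) =
    (let z = x*d - c; y = a + d in (x * y * z + 4 - x\<^sup>2 - y\<^sup>2 - z\<^sup>2) * t)"
  using assms unfolding XPm_def XMm_def mk_mult mk_trace Let_def by algebra

lemma I4:
  assumes "a*d = 1" "t^2 - (x*d - c)*t*e + e^2 = 1"
  shows "trace (XMm t e x a c d ** (mk x 1 (-1) 0 ** mk a 0 c d) ** YMm t e x a c d ** (XMm t e x a c d ** (mk x 1 (-1) 0 ** mk a 0 c d)))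
    - trace (YPm t e x a c d ** (mk a 0 c d ** mk x 1 (-1) 0) ** XPm t e x a c d ** (mk x 1 (-1) 0 ** mk a 0 c d ** XPm t e x a c d)) =
    (let z = x*d - c; y = a + d; s = z*t - e;
         T = (x * s - y * t) * (y * s - x * t) - z * (s\<^sup>2 + t\<^sup>2) + 4 * s * t
     in (x * y * z + 4 - x\<^sup>2 - y\<^sup>2 - z\<^sup>2) * (T * t - s))"
  using assms unfolding XPm_def XMm_def YMm_def YPm_def mk_mult mk_trace Let_def by algebra


lemma trace_lin:
  "trace (mk (p*e1 - q) (p*e2) (p*e3) (p*e4 - q) ** M) = p * trace (mk e1 e2 e3 e4 ** M) - q * trace M"
proof -
  obtain m1 m2 m3 m4 where M: "M = mk m1 m2 m3 m4" by (metis mk_eta)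
  show ?thesis unfolding M by (simp add: algebra_simps)
qed

lemma main_conc:
  fixes x a c d :: complex and m n :: int
  assumes ad: "a*d = 1"
  shows "trace (eval_word (mk x 1 (-1) 0) (mk a 0 c d) (r_word m n @ [La, Lb]))
       - trace (eval_word (mk x 1 (-1) 0) (mk a 0 c d) (word_rev (r_word m n) @ [La, Lb]))
    = (let y = a + d; z = x*d - c;
           t = (x * cheb_S m z - y * cheb_S (m - 1) z) * (y * cheb_S m z - x * cheb_S (m - 1) z)
               - z * ((cheb_S m z)\<^sup>2 + (cheb_S (m - 1) z)\<^sup>2) + 4 * cheb_S m z * cheb_S (m - 1) z
       in (x * y * z + 4 - x\<^sup>2 - y\<^sup>2 - z\<^sup>2) * (cheb_S n t * cheb_S (m - 1) z - cheb_S (n - 1) t * cheb_S m z))"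
proof -
  define A0 where "A0 = mk x 1 (-1) 0"
  define B0 where "B0 = mk a 0 c d"
  define z where "z = x*d - c"
  define y where "y = a + d"
  define \<tau> where "\<tau> = cheb_S (m - 1) z"
  define \<eta> where "\<eta> = cheb_S (m - 2) z"
  have \<sigma>: "cheb_S m z = z * \<tau> - \<eta>"
    using S_rec[of "m - 1" z] unfolding \<tau>_def \<eta>_def by simp
  have rel: "\<tau>^2 - (x*d - c)*\<tau>*\<eta> + \<eta>^2 = 1"
    using S_id[of "m - 1" z] unfolding \<tau>_def \<eta>_def z_def by (simp add: algebra_simps)
  have dA: "det A0 = 1" unfolding A0_def by simp
  have dB: "det B0 = 1" unfolding B0_def using ad by simp
  have dB': "a * d - 0 * c = 1" using ad by simp
  have dA': "x * 0 - 1 * (-1) = (1::complex)" by simp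
  have iA: "matrix_inv A0 = mk 0 (-1) 1 x" unfolding A0_def using matrix_inv_mk[OF dA'] by simp
  have iB: "matrix_inv B0 = mk d 0 (-c) a" unfolding B0_def using matrix_inv_mk[OF dB'] by simp
  have eAB: "eval_word A0 B0 [La, Lb] = A0 ** B0" by (simp add: mat1_mk[symmetric])
  have eBA: "eval_word A0 B0 [Lb, La] = B0 ** A0" by (simp add: mat1_mk[symmetric])
  have eX: "eval_word A0 B0 [La, Lbi] = mk (x*d - c) a (-d) 0"
    by (simp add: iB A0_def mat1_mk)
  have eY: "eval_word A0 B0 [Lai, Lb] = mk (- c) (- d) (a + x*c) (x*d)"
    by (simp add: iA B0_def mat1_mk)
  have eX': "eval_word A0 B0 [Lbi, La] = mk (d*x) d (- c*x - a) (- c)"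
    by (simp add: iB A0_def mat1_mk)
  have eY': "eval_word A0 B0 [Lb, Lai] = mk 0 (- a) d (d*x - c)"
    by (simp add: iA B0_def mat1_mk)
  have Xm: "eval_word A0 B0 (word_pow [La, Lbi] m) = XMm \<tau> \<eta> x a c d"
    using eval_word_pow[OF dA dB eX, of m] ad unfolding XMm_def \<tau>_def \<eta>_def z_def
    by (simp add: mk_eq_iff algebra_simps)
  have Ym: "eval_word A0 B0 (word_pow [Lai, Lb] m) = YMm \<tau> \<eta> x a c d"
    using eval_word_pow[OF dA dB eY, of m] ad unfolding YMm_def \<tau>_def \<eta>_def z_def
    by (simp add: mk_eq_iff algebra_simps)
  have Xm': "eval_word A0 B0 (word_pow [Lbi, La] m) = XPm \<tau> \<eta> x a c d"
    using eval_word_pow[OF dA dB eX', of m] ad unfolding XPm_def \<tau>_def \<eta>_def z_def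
    by (simp add: mk_eq_iff algebra_simps)
  have Ym': "eval_word A0 B0 (word_pow [Lb, Lai] m) = YPm \<tau> \<eta> x a c d"
    using eval_word_pow[OF dA dB eY', of m] ad unfolding YPm_def \<tau>_def \<eta>_def z_def
    by (simp add: mk_eq_iff algebra_simps)
  define W where "W = XMm \<tau> \<eta> x a c d ** (A0 ** B0) ** YMm \<tau> \<eta> x a c d"
  define W' where "W' = YPm \<tau> \<eta> x a c d ** (B0 ** A0) ** XPm \<tau> \<eta> x a c d"
  have eW: "eval_word A0 B0 (w_word m) = W"
    unfolding w_word_def W_def eval_word_append Xm Ym eAB by (simp add: matrix_mul_assoc)
  have rw: "rev (w_word m) = word_pow [Lb, Lai] m @ [Lb, La] @ word_pow [Lbi, La] m"
    unfolding w_word_def using word_rev_pow[of "[La, Lbi]" m] word_rev_pow[of "[Lai, Lb]" m]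
    by (simp add: word_rev_def)
  have eW': "eval_word A0 B0 (rev (w_word m)) = W'"
    unfolding rw W'_def eval_word_append Xm' Ym' eBA by (simp add: matrix_mul_assoc)
  obtain e1 e2 e3 e4 where We: "W = mk e1 e2 e3 e4" by (metis mk_eta)
  obtain f1 f2 f3 f4 where We': "W' = mk f1 f2 f3 f4" by (metis mk_eta)
  have de: "e1 * e4 - e2 * e3 = 1" using det_eval_word[OF dA dB, of "w_word m"] eW We by simp
  have df: "f1 * f4 - f2 * f3 = 1" using det_eval_word[OF dA dB, of "rev (w_word m)"] eW' We' by simp
  define T where "T = (x * (z * \<tau> - \<eta>) - y * \<tau>) * (y * (z * \<tau> - \<eta>) - x * \<tau>)
     - z * ((z * \<tau> - \<eta>)\<^sup>2 + \<tau>\<^sup>2) + 4 * (z * \<tau> - \<eta>) * \<tau>"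
  have tW: "e1 + e4 = T"
    using I1[OF ad rel] We unfolding W_def A0_def B0_def T_def y_def z_def Let_def by simp
  have tW': "f1 + f4 = T"
    using I2[OF ad rel] We' unfolding W'_def A0_def B0_def T_def y_def z_def Let_def by simp
  define p where "p = cheb_S (n - 1) T"
  define q where "q = cheb_S (n - 2) T"
  have Wn: "eval_word A0 B0 (word_pow (w_word m) n) = mk (p*e1 - q) (p*e2) (p*e3) (p*e4 - q)"
    using eval_word_pow[OF dA dB eW[unfolded We] de, of n] unfolding tW p_def q_def by simp
  have Wn': "eval_word A0 B0 (word_pow (rev (w_word m)) n) = mk (p*f1 - q) (p*f2) (p*f3) (p*f4 - q)"
    using eval_word_pow[OF dA dB eW'[unfolded We'] df, of n] unfolding tW' p_def q_def by simp
  have rr: "word_rev (r_word m n) = word_pow [Lbi, La] m @ word_pow (rev (w_word m)) n"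
    unfolding r_word_def using word_rev_pow[of "[La, Lbi]" m] word_rev_pow[of "w_word m" n]
    by (simp add: word_rev_def)
  define N1 where "N1 = XMm \<tau> \<eta> x a c d ** (A0 ** B0)"
  define N2 where "N2 = A0 ** B0 ** XPm \<tau> \<eta> x a c d"
  have L1: "trace (eval_word A0 B0 (r_word m n @ [La, Lb])) = p * trace (W ** N1) - q * trace N1"
  proof -
    have "eval_word A0 B0 (r_word m n @ [La, Lb]) = mk (p*e1 - q) (p*e2) (p*e3) (p*e4 - q) ** N1"
      unfolding r_word_def eval_word_append Wn Xm eAB N1_def by (simp add: matrix_mul_assoc)
    then show ?thesis using trace_lin We by simp
  qed
  have L2: "trace (eval_word A0 B0 (word_rev (r_word m n) @ [La, Lb])) = p * trace (W' ** N2) - q * trace N2"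
  proof -
    have "trace (eval_word A0 B0 (word_rev (r_word m n) @ [La, Lb]))
        = trace (XPm \<tau> \<eta> x a c d ** (mk (p*f1 - q) (p*f2) (p*f3) (p*f4 - q) ** (A0 ** B0)))"
      unfolding rr eval_word_append Wn' Xm' eAB by (simp add: matrix_mul_assoc)
    also have "\<dots> = trace (mk (p*f1 - q) (p*f2) (p*f3) (p*f4 - q) ** N2)"
      unfolding N2_def by (metis trace_mul_sym matrix_mul_assoc)
    finally show ?thesis using trace_lin We' by simp
  qed
  define K where "K = x * y * z + 4 - x\<^sup>2 - y\<^sup>2 - z\<^sup>2"
  have C2: "trace N1 - trace N2 = K * \<tau>"
    using I3[OF ad rel] unfolding N1_def N2_def A0_def B0_def K_def y_def z_def Let_def by simp
  have C1: "trace (W ** N1) - trace (W' ** N2) = K * (T * \<tau> - (z * \<tau> - \<eta>))"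
    using I4[OF ad rel] unfolding W_def W'_def N1_def N2_def A0_def B0_def K_def T_def y_def z_def Let_def
    by (simp add: matrix_mul_assoc)
  have Sn: "cheb_S n T = T * p - q"
    using S_rec[of "n - 1" T] unfolding p_def q_def by simp
  have RHS: "(let y = a + d; z = x*d - c;
           t = (x * cheb_S m z - y * cheb_S (m - 1) z) * (y * cheb_S m z - x * cheb_S (m - 1) z)
               - z * ((cheb_S m z)\<^sup>2 + (cheb_S (m - 1) z)\<^sup>2) + 4 * cheb_S m z * cheb_S (m - 1) z
       in (x * y * z + 4 - x\<^sup>2 - y\<^sup>2 - z\<^sup>2) * (cheb_S n t * cheb_S (m - 1) z - cheb_S (n - 1) t * cheb_S m z))
     = K * ((T * p - q) * \<tau> - p * (z * \<tau> - \<eta>))"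
    unfolding Let_def y_def[symmetric] z_def[symmetric] \<tau>_def[symmetric] \<sigma> T_def[symmetric] Sn p_def[symmetric] K_def[symmetric]
    by simp
  have "p * trace (W ** N1) - q * trace N1 - (p * trace (W' ** N2) - q * trace N2)
      = p * (trace (W ** N1) - trace (W' ** N2)) - q * (trace N1 - trace N2)"
    by (simp add: algebra_simps)
  also have "\<dots> = K * ((T * p - q) * \<tau> - p * (z * \<tau> - \<eta>))"
    unfolding C1 C2 by (simp add: algebra_simps)
  finally show ?thesis unfolding RHS A0_def[symmetric] B0_def[symmetric] L1 L2 .
qed

theorem proposition3p10:
  fixes m n :: int and x y z :: complex
  shows "trace_poly (r_word m n @ [La, Lb]) x y z - trace_poly (word_rev (r_word m n) @ [La, Lb]) x y z
    = (let t = (x * cheb_S m z - y * cheb_S (m - 1) z) * (y * cheb_S m z - x * cheb_S (m - 1) z)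
               - z * ((cheb_S m z)\<^sup>2 + (cheb_S (m - 1) z)\<^sup>2) + 4 * cheb_S m z * cheb_S (m - 1) z
       in (x * y * z + 4 - x\<^sup>2 - y\<^sup>2 - z\<^sup>2) * (cheb_S n t * cheb_S (m - 1) z - cheb_S (n - 1) t * cheb_S m z))"
proof -
  define s where "s = csqrt (y^2 - 4)"
  define a where "a = (y + s) / 2"
  define d where "d = y - a"
  define c where "c = x * d - z"
  have s2: "s^2 = y^2 - 4" unfolding s_def by simp
  have ad: "a * d = 1" unfolding d_def a_def using s2 by (simp add: field_simps power2_eq_square)
  have dB': "a * d - 0 * c = 1" using ad by simp
  have dA': "x * 0 - 1 * (-1) = (1::complex)" by simp
  have dA: "det (mk x 1 (-1) 0) = 1" by simp
  have dB: "det (mk a 0 c d) = 1" using ad by simp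
  have tA: "trace (mk x 1 (-1) 0) = x" by simp
  have tB: "trace (mk a 0 c d) = y" unfolding d_def by simp
  have tAB: "trace (mk x 1 (-1) 0 ** matrix_inv (mk a 0 c d)) = z"
  proof -
    have "trace (mk x 1 (-1) 0 ** matrix_inv (mk a 0 c d)) = x * d - c"
      unfolding matrix_inv_mk[OF dB'] by simp
    then show ?thesis unfolding c_def by simp
  qed
  have yy: "y = a + d" unfolding d_def by simp
  have zz: "z = x * d - c" unfolding c_def by simp
  show ?thesis
    using trace_poly_eq[OF dA dB, of "r_word m n @ [La, Lb]"] trace_poly_eq[OF dA dB, of "word_rev (r_word m n) @ [La, Lb]"]
      main_conc[OF ad, where x=x and m=m and n=n and c=c]
    unfolding tA tB tAB by (simp only: yy zz Let_def)
qed

end
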